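(* For all processes $s,t$ of a PTS over $A_\tau$, $s$ and $t$ are weak probabilistic trace equivalent if and only if $\mathcal{L}^{\mathrm{w}}(s)\equiv^\dagger\mathcal{L}^{\mathrm{w}}(t)$, i.e. every formula in $\mathcal{L}^{\mathrm{w}}(s)$ is $\equiv^\dagger$-related to some formula in $\mathcal{L}^{\mathrm{w}}(t)$ and vice versa.
   Context: PTS $(\mathcal{S},A_\tau,\to)$ with $A_\tau=A\cup\{\tau\}$, $\tau$ the silent action, finitely supported distributions; processes image-finite and finite. Computations $c=s_0\xrightarrow{a_1}\cdots\xrightarrow{a_n}s_n$ via transitions $s_{i-1}\xrightarrow{a_i}\pi_i$, $s_i\in\mathrm{supp}(\pi_i)$; $\Pr(c)=\prod\pi_i(s_i)$ (empty: 1); $|c|=n$; $\mathrm{tr}(c)=a_1\cdots a_n$; maximal = not a proper prefix of another computation from the same process; $\mathcal{C}_{\max}(z)$; $\Pr$ of a set is the sum. A resolution of $s$ is a PTS $\mathcal{Z}=(Z,A_\tau,\to_{\mathcal{Z}})$ with $\mathrm{corr}\colon Z\to\mathcal{S}$ and initial state $z_s$, $\mathrm{corr}(z_s)=s$, such that $z_s$ is in no target support, every other state is in the support of a target of a transition from a different state, every $z\xrightarrow{a}_{\mathcal{Z}}\pi$ is matched by $\mathrm{corr}(z)\xrightarrow{a}\pi'$ with $\pi(z')=\pi'(\mathrm{corr}(z'))$, and each state has at most one outgoing transition; $\mathrm{res}(s)$ the set of resolutions. Traces $\alpha\equiv\beta$ iff they coincide after deleting all $\tau$'s. For $\alpha\in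 A^\star$, $\mathcal{C}^{\mathrm{w}}(z,\alpha)$ is the set of computations $c$ from $z$ with $\mathrm{tr}(c)\equiv\alpha$ that are not proper prefixes of another computation $c'$ from $z$ with $\mathrm{tr}(c')\equiv\alpha$. $s,t$ are weak probabilistic trace equivalent iff for every $\mathcal{Z}_s\in\mathrm{res}(s)$ there is $\mathcal{Z}_t\in\mathrm{res}(t)$ with $\Pr(\mathcal{C}^{\mathrm{w}}(z_s,\alpha))=\Pr(\mathcal{C}^{\mathrm{w}}(z_t,\alpha))$ for all $\alpha\in A^\star$, and symmetrically. Logic $\mathcal{L}^{\mathrm{w}}$: trace formulae $\Phi::=\top\mid\langle a\rangle\Phi$ with $a\in A_\tau$, $\mathrm{depth}(\top)=0$, $\mathrm{depth}(\langle a\rangle\Phi)=1+\mathrm{depth}(\Phi)$; trace distribution formulae $\bigoplus_{i\in I}r_i\Phi_i$ ($I$ finite nonempty, $\Phi_i$ pairwise distinct, $r_i\in(0,1]$, $\sum r_i=1$), viewed as distributions on trace formulae. $c\models\top$ always; $c\models\langle a\rangle\Phi$ iff $c=s\xrightarrow{a}c'$ with $c'\models\Phi$. $s\models\bigoplus_i r_i\Phi_i$ iff some $\mathcal{Z}\in\mathrm{res}(s)$ with initial state $z$ satisfies $\Pr(\{c\in\mathcal{C}_{\max}(z):c\models\Phi_i,|c|=\mathrm{depth}(\Phi_i)\})=r_i$ for all $i$. $\mathcal{L}^{\mathrm{w}}(s)$ is the set of trace distribution formulae satisfied by $s$. Every trace formula is $\Phi_\alpha$ for a unique $\alpha\in A_\tau^\star$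 ($\Phi_\varepsilon=\top$, $\Phi_{a\alpha}=\langle a\rangle\Phi_\alpha$); $\Phi_\alpha\equiv\Phi_\beta$ iff $\alpha\equiv\beta$; $\Psi_1\equiv^\dagger\Psi_2$ iff $\Psi_1,\Psi_2$ assign the same total probability to every $\equiv$-class of trace formulae. *)

theory Defs
  imports "HOL-Probability.Probability_Mass_Function"
begin

datatype 'a act = Tau | Act 'a

type_synonym ('s, 'a) pts = "('s \<times> 'a act \<times> 's pmf) set"

type_synonym ('s, 'a) comp = "('a act \<times> 's pmf \<times> 's) list"

inductive is_comp :: "('s, 'a) pts \<Rightarrow> 's \<Rightarrow> ('s, 'a) comp \<Rightarrow> bool" for T where
  comp_Nil: "is_comp T s []"
| comp_Cons: "(s, a, \<pi>) \<in> T \<Longrightarrow> s' \<in> set_pmf \<pi> \<Longrightarrow> is_comp T s' c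
              \<Longrightarrow> is_comp T s ((a, \<pi>, s') # c)"

definition comps :: "('s, 'a) pts \<Rightarrow> 's \<Rightarrow> ('s, 'a) comp set" where
  "comps T s = {c. is_comp T s c}"

fun prob_comp :: "('s, 'a) comp \<Rightarrow> real" where
  "prob_comp [] = 1"
| "prob_comp ((a, \<pi>, s') # c) = pmf \<pi> s' * prob_comp c"

definition prob_set :: "('s, 'a) comp set \<Rightarrow> real" where
  "prob_set C = (\<Sum>c\<in>C. prob_comp c)"

definition trace :: "('s, 'a) comp \<Rightarrow> 'a act list" where
  "trace c = map fst c"

definition proper_prefix :: "'x list \<Rightarrow> 'x list \<Rightarrow> bool" where
  "proper_prefix c c' \<longleftrightarrow> (\<exists>d. d \<noteq> [] \<and> c' = c @ d)"

definition max_comps :: "('s, 'a) pts \<Rightarrow> 's \<Rightarrow> ('s, 'a) comp set" where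
  "max_comps T s = {c \<in> comps T s. \<not> (\<exists>c'\<in>comps T s. proper_prefix c c')}"

fun vis :: "'a act list \<Rightarrow> 'a list" where
  "vis [] = []"
| "vis (Tau # xs) = vis xs"
| "vis (Act a # xs) = a # vis xs"

definition trace_equiv :: "'a act list \<Rightarrow> 'a act list \<Rightarrow> bool" where
  "trace_equiv \<alpha> \<beta> \<longleftrightarrow> vis \<alpha> = vis \<beta>"

definition weak_comps :: "('s, 'a) pts \<Rightarrow> 's \<Rightarrow> 'a list \<Rightarrow> ('s, 'a) comp set" where
  "weak_comps T z \<alpha> = {c \<in> comps T z. vis (trace c) = \<alpha> \<and>
      \<not> (\<exists>c'\<in>comps T z. vis (trace c') = \<alpha> \<and> proper_prefix c c')}"

definition is_resolution ::
  "('s, 'a) pts \<Rightarrow> 's \<Rightarrow> nat set \<Rightarrow> (nat, 'a) pts \<Rightarrow> (nat \<Rightarrow> 's) \<Rightarrow> nat \<Rightarrow> bool" where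
  "is_resolution T s Z TZ corr z0 \<longleftrightarrow>
     z0 \<in> Z \<and> corr z0 = s \<and>
     (\<forall>(z, a, \<pi>)\<in>TZ. z \<in> Z \<and> set_pmf \<pi> \<subseteq> Z \<and> finite (set_pmf \<pi>)) \<and>
     (\<forall>(z, a, \<pi>)\<in>TZ. z0 \<notin> set_pmf \<pi>) \<and>
     (\<forall>z\<in>Z. z \<noteq> z0 \<longrightarrow> (\<exists>(z', a, \<pi>)\<in>TZ. z' \<noteq> z \<and> z \<in> set_pmf \<pi>)) \<and>
     (\<forall>(z, a, \<pi>)\<in>TZ. \<exists>\<pi>'. (corr z, a, \<pi>') \<in> T \<and>
          (\<forall>z'\<in>Z. pmf \<pi> z' = pmf \<pi>' (corr z'))) \<and>
     (\<forall>z a1 \<pi>1 a2 \<pi>2. (z, a1, \<pi>1) \<in> TZ \<longrightarrow> (z, a2, \<pi>2) \<in> TZ \<longrightarrow> a1 = a2 \<and> \<pi>1 = \<pi>2)"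

definition wpt_sim :: "('s, 'a) pts \<Rightarrow> 's \<Rightarrow> 's \<Rightarrow> bool" where
  "wpt_sim T s t \<longleftrightarrow>
     (\<forall>Z TZ corr z. is_resolution T s Z TZ corr z \<longrightarrow>
        (\<exists>Z' TZ' corr' z'. is_resolution T t Z' TZ' corr' z' \<and>
           (\<forall>\<alpha>. prob_set (weak_comps TZ z \<alpha>) = prob_set (weak_comps TZ' z' \<alpha>))))"

definition weak_trace_equiv :: "('s, 'a) pts \<Rightarrow> 's \<Rightarrow> 's \<Rightarrow> bool" where
  "weak_trace_equiv T s t \<longleftrightarrow> wpt_sim T s t \<and> wpt_sim T t s"

datatype 'a tform = TTop | Diam "'a act" "'a tform"

fun depth :: "'a tform \<Rightarrow> nat" where
  "depth TTop = 0"
| "depth (Diam a \<Phi>) = Suc (depth \<Phi>)"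

fun tf_trace :: "'a tform \<Rightarrow> 'a act list" where
  "tf_trace TTop = []"
| "tf_trace (Diam a \<Phi>) = a # tf_trace \<Phi>"

fun sat_c :: "('s, 'a) comp \<Rightarrow> 'a tform \<Rightarrow> bool" where
  "sat_c c TTop = True"
| "sat_c [] (Diam a \<Phi>) = False"
| "sat_c ((b, \<pi>, s') # c) (Diam a \<Phi>) = (b = a \<and> sat_c c \<Phi>)"

definition sat :: "('s, 'a) pts \<Rightarrow> 's \<Rightarrow> 'a tform pmf \<Rightarrow> bool" where
  "sat T s \<Psi> \<longleftrightarrow>
     (\<exists>Z TZ corr z. is_resolution T s Z TZ corr z \<and>
        (\<forall>\<Phi>\<in>set_pmf \<Psi>.
           prob_set {c \<in> max_comps TZ z. sat_c c \<Phi> \<and> length c = depth \<Phi>} = pmf \<Psi> \<Phi>))"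

definition Lw :: "('s, 'a) pts \<Rightarrow> 's \<Rightarrow> 'a tform pmf set" where
  "Lw T s = {\<Psi>. finite (set_pmf \<Psi>) \<and> sat T s \<Psi>}"

definition tf_equiv :: "'a tform \<Rightarrow> 'a tform \<Rightarrow> bool" where
  "tf_equiv \<Phi> \<Phi>' \<longleftrightarrow> trace_equiv (tf_trace \<Phi>) (tf_trace \<Phi>')"

definition dag_equiv :: "'a tform pmf \<Rightarrow> 'a tform pmf \<Rightarrow> bool" where
  "dag_equiv \<Psi>1 \<Psi>2 \<longleftrightarrow>
     (\<forall>\<Phi>. measure_pmf.prob \<Psi>1 {\<Phi>'. tf_equiv \<Phi>' \<Phi>} = measure_pmf.prob \<Psi>2 {\<Phi>'. tf_equiv \<Phi>' \<Phi>})"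

definition Lset_equiv :: "'a tform pmf set \<Rightarrow> 'a tform pmf set \<Rightarrow> bool" where
  "Lset_equiv L1 L2 \<longleftrightarrow>
     (\<forall>\<Psi>\<in>L1. \<exists>\<Psi>'\<in>L2. dag_equiv \<Psi> \<Psi>') \<and> (\<forall>\<Psi>'\<in>L2. \<exists>\<Psi>\<in>L1. dag_equiv \<Psi> \<Psi>')"

end

theory Submission
  imports Defs
begin

lemma pmf_bind_fin:
  assumes "finite (set_pmf \<pi>)"
  shows "pmf (bind_pmf \<pi> f) x = (\<Sum>z\<in>set_pmf \<pi>. pmf \<pi> z * pmf (f z) x)"
  unfolding pmf_bind
  by (subst integral_measure_pmf[OF assms]) auto

lemma prob_bind_fin:
  assumes "finite (set_pmf \<pi>)"
  shows "measure_pmf.prob (bind_pmf \<pi> f) S = (\<Sum>z\<in>set_pmf \<pi>. pmf \<pi> z * measure_pmf.prob (f z) S)"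
proof -
  have "measure_pmf.prob (bind_pmf \<pi> f) S = pmf (map_pmf (\<lambda>x. x \<in> S) (bind_pmf \<pi> f)) True"
    by (simp add: pmf_map vimage_def)
  also have "\<dots> = pmf (bind_pmf \<pi> (\<lambda>z. map_pmf (\<lambda>x. x \<in> S) (f z))) True"
    by (simp add: map_bind_pmf)
  also have "\<dots> = (\<Sum>z\<in>set_pmf \<pi>. pmf \<pi> z * measure_pmf.prob (f z) S)"
    by (simp add: pmf_bind_fin[OF assms] pmf_map vimage_def)
  finally show ?thesis .
qed

lemma pmf_eq_on_supp:
  assumes fin: "finite (set_pmf p)" and eq: "\<forall>x\<in>set_pmf p. pmf p x = pmf q x"
  shows "p = q"
proof (rule pmf_eqI)
  fix x
  show "pmf p x = pmf q x"
  proof (cases "x \<in> set_pmf p")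
    case True then show ?thesis using eq by auto
  next
    case False
    have s1: "sum (pmf q) (set_pmf p) = 1"
      using sum_pmf_eq_1[OF fin, of p] eq by (metis (no_types, lifting) sum.cong order_refl)
    have "measure_pmf.prob q (insert x (set_pmf p)) = pmf q x + sum (pmf q) (set_pmf p)"
      using False fin by (simp add: measure_measure_pmf_finite)
    moreover have "measure_pmf.prob q (insert x (set_pmf p)) \<le> 1" by simp
    ultimately have "pmf q x \<le> 0" using s1 by simp
    then have "pmf q x = 0" using pmf_nonneg[of q x] by simp
    then show ?thesis using False by (simp add: set_pmf_eq)
  qed
qed

lemma prob_eq_pointwise:
  assumes "\<forall>x\<in>A. pmf p x = pmf q x"
  shows "measure_pmf.prob p A = measure_pmf.prob q A"
  using assms by (simp add: measure_pmf_conv_infsetsum cong: infsetsum_cong)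

definition pfx :: "'x list \<Rightarrow> 'x list \<Rightarrow> bool" where
  "pfx u v \<longleftrightarrow> (\<exists>d. v = u @ d)"

lemma pfx_Nil[simp]: "pfx [] v" by (simp add: pfx_def)
lemma pfx_Cons_Nil[simp]: "\<not> pfx (x#u) []" by (simp add: pfx_def)
lemma pfx_Cons_Cons[simp]: "pfx (x#u) (y#v) \<longleftrightarrow> x = y \<and> pfx u v" by (auto simp: pfx_def)

lemma uniq_prefix:
  fixes Q1 Q2 :: "'x list pmf"
  assumes b1: "set_pmf Q1 \<subseteq> {g. length g \<le> N}" and b2: "set_pmf Q2 \<subseteq> {g. length g \<le> N}"
    and eq: "\<forall>u. measure_pmf.prob Q1 {g. pfx u g} = measure_pmf.prob Q2 {g. pfx u g}"
  shows "Q1 = Q2"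
proof -
  have claim: "\<forall>g. N < length g + k \<longrightarrow> pmf Q1 g = pmf Q2 g" for k
  proof (induction k)
    case 0
    show ?case
    proof (intro allI impI)
      fix g :: "'x list" assume "N < length g + 0"
      then have "g \<notin> set_pmf Q1" "g \<notin> set_pmf Q2" using b1 b2 by auto
      then show "pmf Q1 g = pmf Q2 g" by (simp add: set_pmf_eq)
    qed
  next
    case (Suc k)
    show ?case
    proof (intro allI impI)
      fix g :: "'x list" assume "N < length g + Suc k"
      let ?A = "{h. pfx g h} - {g}"
      have longer: "\<forall>h\<in>?A. N < length h + k"
      proof
        fix h assume "h \<in> ?A"
        then obtain d where "h = g @ d" "d \<noteq> []" by (auto simp: pfx_def)
        then have "length h \<ge> Suc (length g)" by (cases d) auto
        then show "N < length h + k" using \<open>N < length g + Suc k\<close> by linarith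
      qed
      have eqA: "measure_pmf.prob Q1 ?A = measure_pmf.prob Q2 ?A"
        by (rule prob_eq_pointwise) (use Suc.IH longer in auto)
      have dec: "measure_pmf.prob Q {h. pfx g h} = pmf Q g + measure_pmf.prob Q ?A" for Q :: "'x list pmf"
      proof -
        have e: "{h. pfx g h} = {g} \<union> ?A" by (auto simp: pfx_def)
        have "measure_pmf.prob Q ({g} \<union> ?A) = pmf Q g + measure_pmf.prob Q ?A"
          by (subst measure_pmf.finite_measure_Union) (auto simp: measure_pmf_single)
        then show ?thesis by (simp only: e[symmetric])
      qed
      show "pmf Q1 g = pmf Q2 g" using dec[of Q1] dec[of Q2] eq eqA by simp
    qed
  qed
  show ?thesis by (intro pmf_eqI) (use claim[of "Suc N"] in auto)
qed

section \<open>Computations\<close>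

lemma is_comp_Nil_iff[simp]: "is_comp T s []" by (rule comp_Nil)

lemma is_comp_Cons_iff[simp]:
  "is_comp T s ((a, \<pi>, s') # c) \<longleftrightarrow> (s, a, \<pi>) \<in> T \<and> s' \<in> set_pmf \<pi> \<and> is_comp T s' c"
  by (auto elim: is_comp.cases intro: comp_Cons)

lemma pp_Nil[simp]: "proper_prefix [] c \<longleftrightarrow> c \<noteq> []"
  by (auto simp: proper_prefix_def)

lemma pp_Cons: "proper_prefix (x # c) c' \<longleftrightarrow> (\<exists>c''. c' = x # c'' \<and> proper_prefix c c'')"
  by (auto simp: proper_prefix_def)

definition okT :: "(nat, 'a) pts \<Rightarrow> bool" where
  "okT TZ \<longleftrightarrow> (\<forall>(z, a, \<pi>)\<in>TZ. finite (set_pmf \<pi>)) \<and>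
     (\<forall>z a1 \<pi>1 a2 \<pi>2. (z, a1, \<pi>1) \<in> TZ \<longrightarrow> (z, a2, \<pi>2) \<in> TZ \<longrightarrow> a1 = a2 \<and> \<pi>1 = \<pi>2)"

definition bnd :: "(nat, 'a) pts \<Rightarrow> nat \<Rightarrow> nat \<Rightarrow> bool" where
  "bnd TZ n z \<longleftrightarrow> (\<forall>c\<in>comps TZ z. length c \<le> n)"

definition cons3 :: "'a act \<Rightarrow> nat pmf \<Rightarrow> nat \<times> (nat, 'a) comp \<Rightarrow> (nat, 'a) comp" where
  "cons3 a \<pi> = (\<lambda>(z', c). (a, \<pi>, z') # c)"

lemma cons3_apply[simp]: "cons3 a \<pi> (z', c) = (a, \<pi>, z') # c" by (simp add: cons3_def)
lemma cons3_filter: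
  "{m \<in> cons3 a \<pi> ` (SIGMA z':A. C z'). P m} = cons3 a \<pi> ` (SIGMA z':A. {c \<in> C z'. P ((a, \<pi>, z') # c)})"
proof (intro set_eqI iffI)
  fix m assume "m \<in> {m \<in> cons3 a \<pi> ` (SIGMA z':A. C z'). P m}"
  then obtain z' c where "z' \<in> A" "c \<in> C z'" "m = (a, \<pi>, z') # c" "P m" by auto
  then show "m \<in> cons3 a \<pi> ` (SIGMA z':A. {c \<in> C z'. P ((a, \<pi>, z') # c)})"
    by (intro image_eqI[of _ _ "(z', c)"]) auto
next
  fix m assume "m \<in> cons3 a \<pi> ` (SIGMA z':A. {c \<in> C z'. P ((a, \<pi>, z') # c)})"
  then obtain z' c where "z' \<in> A" "c \<in> C z'" "m = (a, \<pi>, z') # c" "P m" by auto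
  then show "m \<in> {m \<in> cons3 a \<pi> ` (SIGMA z':A. C z'). P m}"
    by (auto intro!: image_eqI[of _ _ "(z', c)"])
qed

lemma nil_notin_cons3: "[] \<notin> cons3 a \<pi> ` S"
  unfolding cons3_def by (auto simp: image_iff case_prod_unfold)

lemma inj_cons3: "inj_on (cons3 a \<pi>) X"
  by (auto simp: inj_on_def cons3_def)

lemma prob_set_cons3:
  assumes "finite A" "\<forall>z\<in>A. finite (C z)"
  shows "prob_set (cons3 a \<pi> ` (SIGMA z:A. C z)) = (\<Sum>z\<in>A. pmf \<pi> z * prob_set (C z))"
proof -
  have "prob_set (cons3 a \<pi> ` (SIGMA z:A. C z)) = (\<Sum>p\<in>(SIGMA z:A. C z). prob_comp (cons3 a \<pi> p))"
    unfolding prob_set_def by (simp add: sum.reindex[OF inj_cons3])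
  also have "\<dots> = (\<Sum>z\<in>A. \<Sum>c\<in>C z. pmf \<pi> z * prob_comp c)"
    using assms by (simp add: sum.Sigma cons3_def case_prod_unfold)
  also have "\<dots> = (\<Sum>z\<in>A. pmf \<pi> z * prob_set (C z))"
    by (simp add: prob_set_def sum_distrib_left)
  finally show ?thesis .
qed

lemma comps_notrans:
  assumes "\<forall>a \<pi>. (z, a, \<pi>) \<notin> TZ"
  shows "comps TZ z = {[]}"
proof -
  have "is_comp TZ z c \<Longrightarrow> c = []" for c
    using assms by (cases c) auto
  then show ?thesis by (auto simp: comps_def)
qed

lemma comps_trans:
  assumes "okT TZ" "(z, a, \<pi>) \<in> TZ"
  shows "comps TZ z = insert [] (cons3 a \<pi> ` (SIGMA z':set_pmf \<pi>. comps TZ z'))"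
proof -
  have u: "(z, a', \<pi>') \<in> TZ \<Longrightarrow> a' = a \<and> \<pi>' = \<pi>" for a' \<pi>'
    using assms unfolding okT_def by blast
  show ?thesis
  proof (intro set_eqI iffI)
    fix c assume "c \<in> comps TZ z"
    then show "c \<in> insert [] (cons3 a \<pi> ` (SIGMA z':set_pmf \<pi>. comps TZ z'))"
      using u by (cases c) (auto simp: comps_def cons3_def image_iff)
  next
    fix c assume "c \<in> insert [] (cons3 a \<pi> ` (SIGMA z':set_pmf \<pi>. comps TZ z'))"
    then show "c \<in> comps TZ z" using assms(2) by (auto simp: comps_def cons3_def)
  qed
qed

lemma bnd_step:
  assumes "bnd TZ (Suc n) z" "(z, a, \<pi>) \<in> TZ" "z' \<in> set_pmf \<pi>"
  shows "bnd TZ n z'"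
  unfolding bnd_def
proof
  fix c assume "c \<in> comps TZ z'"
  then have "(a, \<pi>, z') # c \<in> comps TZ z" using assms by (auto simp: comps_def)
  then show "length c \<le> n" using assms(1) unfolding bnd_def by fastforce
qed

lemma bnd_0:
  assumes "bnd TZ 0 z" shows "(z, a, \<pi>) \<notin> TZ"
proof
  assume "(z, a, \<pi>) \<in> TZ"
  obtain z' where "z' \<in> set_pmf \<pi>" using set_pmf_not_empty by fast
  then have "[(a, \<pi>, z')] \<in> comps TZ z" using \<open>(z, a, \<pi>) \<in> TZ\<close> by (auto simp: comps_def)
  then show False using assms unfolding bnd_def by fastforce
qed

lemma finite_comps:
  assumes "okT TZ" shows "bnd TZ n z \<Longrightarrow> finite (comps TZ z)"
proof (induction n arbitrary: z)
  case 0
  have "\<forall>a \<pi>. (z, a, \<pi>) \<notin> TZ" using bnd_0[OF 0] by blast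
  then show ?case using comps_notrans[of z TZ] by simp
next
  case (Suc n)
  show ?case
  proof (cases "\<exists>a \<pi>. (z, a, \<pi>) \<in> TZ")
    case True
    then obtain a \<pi> where t: "(z, a, \<pi>) \<in> TZ" by blast
    have f1: "finite (set_pmf \<pi>)" using assms t unfolding okT_def by blast
    have f2: "\<forall>z'\<in>set_pmf \<pi>. finite (comps TZ z')"
      using Suc.IH bnd_step[OF Suc.prems t] by blast
    have "finite (SIGMA z':set_pmf \<pi>. comps TZ z')" using f1 f2 by (intro finite_SigmaI) auto
    then show ?thesis by (simp only: comps_trans[OF assms t]) simp
  next
    case False
    then have "\<forall>a \<pi>. (z, a, \<pi>) \<notin> TZ" by blast
    then show ?thesis using comps_notrans[of z TZ] by simp
  qed
qed


lemma X1: "{c \<in> {[]::'x list}. \<not> (\<exists>c'\<in>{[]}. proper_prefix c c')} = {[]}"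
  by (auto simp: proper_prefix_def)
lemma max_notrans:
  assumes "\<forall>a \<pi>. (z, a, \<pi>) \<notin> TZ"
  shows "max_comps TZ z = {[]}"
proof -
  have e: "comps TZ z = {[]}" using comps_notrans[OF assms] .
  show ?thesis unfolding max_comps_def e by (fact X1)
qed
lemma X2: "{c \<in> {[]::('s,'x) comp}. vis (trace c) = \<alpha> \<and> \<not> (\<exists>c'\<in>{[]}. vis (trace c') = \<alpha> \<and> proper_prefix c c')} = (if \<alpha> = [] then {[]} else {})"
  by (auto simp: proper_prefix_def trace_def)

lemma weak_notrans:
  assumes "\<forall>a \<pi>. (z, a, \<pi>) \<notin> TZ"
  shows "weak_comps TZ z \<alpha> = (if \<alpha> = [] then {[]} else {})"
proof -
  have e: "comps TZ z = {[]}" using comps_notrans[OF assms] .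
  show ?thesis unfolding weak_comps_def e by (fact X2)
qed

lemma comps_Cons_mem:
  assumes "okT TZ" "(z, a, \<pi>) \<in> TZ"
  shows "(a', \<pi>', z') # c \<in> comps TZ z \<longleftrightarrow> a' = a \<and> \<pi>' = \<pi> \<and> z' \<in> set_pmf \<pi> \<and> c \<in> comps TZ z'"
  using assms unfolding okT_def comps_def by (metis is_comp_Cons_iff mem_Collect_eq)

lemma ex_succ: "\<exists>z'. z' \<in> set_pmf \<pi>"
  using set_pmf_not_empty by fast

lemma one_step:
  assumes t: "(z, a, \<pi>) \<in> TZ"
  obtains z' where "z' \<in> set_pmf \<pi>" "[(a, \<pi>, z')] \<in> comps TZ z"
proof -
  obtain z' where z': "z' \<in> set_pmf \<pi>" using ex_succ[of \<pi>] by (elim exE)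
  have "is_comp TZ z [(a, \<pi>, z')]" using t z' by (intro comp_Cons comp_Nil)
  then have "[(a, \<pi>, z')] \<in> comps TZ z" unfolding comps_def by (rule CollectI)
  then show ?thesis using z' that by blast
qed

lemma max_trans:
  assumes ok: "okT TZ" and t: "(z, a, \<pi>) \<in> TZ"
  shows "max_comps TZ z = cons3 a \<pi> ` (SIGMA z':set_pmf \<pi>. max_comps TZ z')"
proof (intro set_eqI iffI)
  fix x assume x: "x \<in> max_comps TZ z"
  then have xc: "x \<in> comps TZ z" and nx: "\<not> (\<exists>c'\<in>comps TZ z. proper_prefix x c')"
    by (auto simp: max_comps_def)
  show "x \<in> cons3 a \<pi> ` (SIGMA z':set_pmf \<pi>. max_comps TZ z')"
  proof (cases x)
    case Nil
    obtain z' where "[(a, \<pi>, z')] \<in> comps TZ z" using one_step[OF t] by blast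
    moreover have "proper_prefix [] [(a, \<pi>, z')]" by (simp add: proper_prefix_def)
    ultimately have False using nx Nil by blast
    then show ?thesis ..
  next
    case (Cons y c)
    then obtain a' \<pi>' z' where y: "y = (a', \<pi>', z')" by (cases y) auto
    from xc have h: "a' = a" "\<pi>' = \<pi>" "z' \<in> set_pmf \<pi>" "c \<in> comps TZ z'"
      using comps_Cons_mem[OF ok t] Cons y by auto
    have "c \<in> max_comps TZ z'"
    proof -
      { fix c' assume "c' \<in> comps TZ z'" "proper_prefix c c'"
        then have "(a, \<pi>, z') # c' \<in> comps TZ z" "proper_prefix x ((a, \<pi>, z') # c')"
          using comps_Cons_mem[OF ok t] h Cons y by (auto simp: pp_Cons)
        then have False using nx by blast }
      then show ?thesis using h by (auto simp: max_comps_def)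
    qed
    then show ?thesis using h Cons y by (auto simp: cons3_def image_iff)
  qed
next
  fix x assume "x \<in> cons3 a \<pi> ` (SIGMA z':set_pmf \<pi>. max_comps TZ z')"
  then obtain z' c where x: "x = (a, \<pi>, z') # c" and z': "z' \<in> set_pmf \<pi>" and c: "c \<in> max_comps TZ z'"
    by (auto simp: cons3_def)
  have xc: "x \<in> comps TZ z" using comps_Cons_mem[OF ok t] x z' c by (auto simp: max_comps_def)
  { fix c' assume "c' \<in> comps TZ z" "proper_prefix x c'"
    then obtain c'' where "c' = (a, \<pi>, z') # c''" "proper_prefix c c''" using x by (auto simp: pp_Cons)
    then have "c'' \<in> comps TZ z'" "proper_prefix c c''" using comps_Cons_mem[OF ok t] \<open>c' \<in> comps TZ z\<close> by auto
    then have False using c by (auto simp: max_comps_def) }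
  then show "x \<in> max_comps TZ z" using xc by (auto simp: max_comps_def)
qed

lemma trace_Cons[simp]: "trace ((a, \<pi>, z) # c) = a # trace c" by (simp add: trace_def)
lemma trace_Nil[simp]: "trace [] = []" by (simp add: trace_def)

definition wk :: "(nat, 'a) pts \<Rightarrow> nat \<Rightarrow> 'a act \<Rightarrow> 'a list \<Rightarrow> (nat, 'a) comp set" where
  "wk TZ z' a \<alpha> = {c \<in> comps TZ z'. vis (a # trace c) = \<alpha> \<and>
      \<not> (\<exists>e\<in>comps TZ z'. vis (a # trace e) = \<alpha> \<and> proper_prefix c e)}"

lemma weak_trans:
  assumes ok: "okT TZ" and t: "(z, a, \<pi>) \<in> TZ"
  shows "weak_comps TZ z \<alpha> = (if \<alpha> = [] \<and> a \<noteq> Tau then {[]} else {}) \<union>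
           cons3 a \<pi> ` (SIGMA z':set_pmf \<pi>. wk TZ z' a \<alpha>)"
proof (intro set_eqI iffI)
  fix x assume x: "x \<in> weak_comps TZ z \<alpha>"
  then have xc: "x \<in> comps TZ z" and xv: "vis (trace x) = \<alpha>"
    and nx: "\<not> (\<exists>c'\<in>comps TZ z. vis (trace c') = \<alpha> \<and> proper_prefix x c')"
    by (auto simp: weak_comps_def)
  show "x \<in> (if \<alpha> = [] \<and> a \<noteq> Tau then {[]} else {}) \<union> cons3 a \<pi> ` (SIGMA z':set_pmf \<pi>. wk TZ z' a \<alpha>)"
  proof (cases x)
    case Nil
    obtain z' where c1: "[(a, \<pi>, z')] \<in> comps TZ z" using one_step[OF t] by blast
    have "a \<noteq> Tau"
    proof
      assume "a = Tau"
      then have "vis (trace [(a, \<pi>, z')]) = \<alpha>" using Nil xv by (simp add: trace_def)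
      moreover have "proper_prefix x [(a, \<pi>, z')]" using Nil by (simp add: proper_prefix_def)
      ultimately show False using nx c1 by blast
    qed
    then show ?thesis using Nil xv by auto
  next
    case (Cons y c)
    then obtain a' \<pi>' z' where y: "y = (a', \<pi>', z')" by (cases y) auto
    from xc have h: "a' = a" "\<pi>' = \<pi>" "z' \<in> set_pmf \<pi>" "c \<in> comps TZ z'"
      using comps_Cons_mem[OF ok t] Cons y by auto
    have "c \<in> wk TZ z' a \<alpha>"
    proof -
      { fix c' assume "c' \<in> comps TZ z'" "vis (a # trace c') = \<alpha>" "proper_prefix c c'"
        then have "(a, \<pi>, z') # c' \<in> comps TZ z" "proper_prefix x ((a, \<pi>, z') # c')"
            "vis (trace ((a, \<pi>, z') # c')) = \<alpha>"
          using comps_Cons_mem[OF ok t] h Cons y by (auto simp: pp_Cons)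
        then have False using nx by blast }
      then show ?thesis using h xv Cons y by (auto simp: wk_def)
    qed
    then show ?thesis using h Cons y by (auto simp: cons3_def image_iff)
  qed
next
  fix x assume xin: "x \<in> (if \<alpha> = [] \<and> a \<noteq> Tau then {[]} else {}) \<union> cons3 a \<pi> ` (SIGMA z':set_pmf \<pi>. wk TZ z' a \<alpha>)"
  show "x \<in> weak_comps TZ z \<alpha>"
  proof (cases "x = []")
    case True
    then have a: "\<alpha> = []" "a \<noteq> Tau" using xin nil_notin_cons3[of a \<pi>] by (auto split: if_splits)
    then obtain b where b: "a = Act b" by (cases a) auto
    { fix c' assume "c' \<in> comps TZ z" "vis (trace c') = \<alpha>" "proper_prefix x c'"
      then obtain y c'' where "c' = y # c''" using True by (cases c') auto
      moreover obtain a' \<pi>' z' where "y = (a', \<pi>', z')" by (cases y) auto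
      ultimately have False using comps_Cons_mem[OF ok t] \<open>c' \<in> comps TZ z\<close> \<open>vis (trace c') = \<alpha>\<close> a b
        by auto }
    then show ?thesis using True a by (auto simp: weak_comps_def comps_def)
  next
    case False
    then have "x \<in> cons3 a \<pi> ` (SIGMA z':set_pmf \<pi>. wk TZ z' a \<alpha>)" using xin by (auto split: if_splits)
    then obtain p where p: "p \<in> (SIGMA z':set_pmf \<pi>. wk TZ z' a \<alpha>)" "x = cons3 a \<pi> p" by blast
    obtain z' c where "p = (z', c)" by (cases p)
    then have x: "x = (a, \<pi>, z') # c" and z': "z' \<in> set_pmf \<pi>" and c: "c \<in> wk TZ z' a \<alpha>"
      using p by (auto simp: cons3_def)
    have xc: "x \<in> comps TZ z" using comps_Cons_mem[OF ok t] x z' c by (auto simp: wk_def)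
    { fix c' assume "c' \<in> comps TZ z" "vis (trace c') = \<alpha>" "proper_prefix x c'"
      then obtain c'' where "c' = (a, \<pi>, z') # c''" "proper_prefix c c''" using x by (auto simp: pp_Cons)
      then have "c'' \<in> comps TZ z'" "proper_prefix c c''" "vis (a # trace c'') = \<alpha>"
        using comps_Cons_mem[OF ok t] \<open>c' \<in> comps TZ z\<close> \<open>vis (trace c') = \<alpha>\<close> by auto
      then have False using c by (auto simp: wk_def) }
    then show ?thesis using xc c x by (auto simp: weak_comps_def wk_def)
  qed
qed

lemma wk_Tau: "wk TZ z' Tau \<alpha> = weak_comps TZ z' \<alpha>"
  by (simp add: wk_def weak_comps_def)

lemma wk_Act: "wk TZ z' (Act b) \<alpha> = (if \<alpha> \<noteq> [] \<and> hd \<alpha> = b then weak_comps TZ z' (tl \<alpha>) else {})"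
  by (cases \<alpha>) (auto simp: wk_def weak_comps_def)

fun Pd :: "(nat, 'a) pts \<Rightarrow> nat \<Rightarrow> nat \<Rightarrow> 'a act list pmf" where
  "Pd TZ 0 z = return_pmf []"
| "Pd TZ (Suc n) z = (if \<exists>a \<pi>. (z, a, \<pi>) \<in> TZ then
      (let x = (SOME x. (z, fst x, snd x) \<in> TZ) in
        bind_pmf (snd x) (\<lambda>z'. map_pmf (Cons (fst x)) (Pd TZ n z')))
     else return_pmf [])"

lemma Pd_trans:
  assumes ok: "okT TZ" and t: "(z, a, \<pi>) \<in> TZ"
  shows "Pd TZ (Suc n) z = bind_pmf \<pi> (\<lambda>z'. map_pmf (Cons a) (Pd TZ n z'))"
proof -
  have ex: "\<exists>x. (z, x) \<in> TZ" using t by blast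
  define x where "x = (SOME x. (z, x) \<in> TZ)"
  have xin: "(z, x) \<in> TZ" unfolding x_def by (rule someI_ex[OF ex])
  then have "fst x = a" "snd x = \<pi>" using ok t unfolding okT_def by (metis prod.collapse)+
  moreover have "(SOME x. (z, fst x, snd x) \<in> TZ) = x" by (simp add: x_def)
  ultimately show ?thesis using t by (auto simp: Let_def)
qed

lemma Pd_notrans:
  assumes "\<forall>a \<pi>. (z, a, \<pi>) \<notin> TZ"
  shows "Pd TZ n z = return_pmf []"
  using assms by (cases n) auto

lemma vis_Act_Cons[simp]: "vis (Act b # x) = b # vis x" by simp
lemma vis_Tau_Cons[simp]: "vis (Tau # x) = vis x" by simp

lemma pfx_Nil_right: "pfx u [] \<longleftrightarrow> u = []" by (cases u) auto

lemma core_notrans: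
  assumes "\<forall>a \<pi>. (z, a, \<pi>) \<notin> TZ"
  shows "(\<forall>\<beta>. pmf (Pd TZ n z) \<beta> = prob_set {m \<in> max_comps TZ z. trace m = \<beta>}) \<and>
         (\<forall>\<alpha>. prob_set (weak_comps TZ z \<alpha>) = measure_pmf.prob (Pd TZ n z) {\<beta>. pfx \<alpha> (vis \<beta>)})"
proof -
  have 1: "{m \<in> max_comps TZ z. trace m = \<beta>} = (if \<beta> = [] then {[]} else {})" for \<beta>
    unfolding max_notrans[OF assms] by (auto simp: trace_def)
  have P: "Pd TZ n z = return_pmf []" by (rule Pd_notrans[OF assms])
  have A: "pmf (Pd TZ n z) \<beta> = prob_set {m \<in> max_comps TZ z. trace m = \<beta>}" for \<beta>
    unfolding 1 P by (cases "\<beta> = []") (simp_all add: prob_set_def)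
  have B: "prob_set (weak_comps TZ z \<alpha>) = measure_pmf.prob (Pd TZ n z) {\<beta>. pfx \<alpha> (vis \<beta>)}" for \<alpha>
    unfolding weak_notrans[OF assms] P by (cases "\<alpha> = []") (simp_all add: prob_set_def pfx_Nil_right)
  show ?thesis using A B by blast
qed

lemma prob_set_union:
  assumes "finite A" "finite B" "A \<inter> B = {}"
  shows "prob_set (A \<union> B) = prob_set A + prob_set B"
  using assms by (simp add: prob_set_def sum.union_disjoint)

lemma core:
  assumes ok: "okT TZ"
  shows "bnd TZ n z \<Longrightarrow>
    (\<forall>\<beta>. pmf (Pd TZ n z) \<beta> = prob_set {m \<in> max_comps TZ z. trace m = \<beta>}) \<and>
    (\<forall>\<alpha>. prob_set (weak_comps TZ z \<alpha>) = measure_pmf.prob (Pd TZ n z) {\<beta>. pfx \<alpha> (vis \<beta>)})"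
proof (induction n arbitrary: z)
  case 0
  have "\<forall>a \<pi>. (z, a, \<pi>) \<notin> TZ" using bnd_0[OF 0] by blast
  then show ?case by (rule core_notrans)
next
  case (Suc n)
  show ?case
  proof (cases "\<exists>a \<pi>. (z, a, \<pi>) \<in> TZ")
    case False
    then have "\<forall>a \<pi>. (z, a, \<pi>) \<notin> TZ" by blast
    then show ?thesis by (rule core_notrans)
  next
    case True
    then obtain a \<pi> where t: "(z, a, \<pi>) \<in> TZ" by blast
    have fin\<pi>: "finite (set_pmf \<pi>)" using ok t unfolding okT_def by blast
    have bz': "bnd TZ n z'" if "z' \<in> set_pmf \<pi>" for z'
      using bnd_step[OF Suc.prems t that] .
    have IH1: "pmf (Pd TZ n z') \<beta> = prob_set {m \<in> max_comps TZ z'. trace m = \<beta>}" if "z' \<in> set_pmf \<pi>" for z' \<beta>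
      using Suc.IH[OF bz'[OF that]] by blast
    have IH2: "prob_set (weak_comps TZ z' \<alpha>) = measure_pmf.prob (Pd TZ n z') {\<beta>. pfx \<alpha> (vis \<beta>)}"
      if "z' \<in> set_pmf \<pi>" for z' \<alpha>
      using Suc.IH[OF bz'[OF that]] by blast
    have finc: "finite (comps TZ z')" if "z' \<in> set_pmf \<pi>" for z'
      using finite_comps[OF ok bz'[OF that]] .
    have finmax: "finite {m \<in> max_comps TZ z'. P m}" if "z' \<in> set_pmf \<pi>" for z' P
      by (rule finite_subset[OF _ finc[OF that]]) (auto simp: max_comps_def)
    have finweak: "finite (weak_comps TZ z' \<alpha>)" if "z' \<in> set_pmf \<pi>" for z' \<alpha>
      by (rule finite_subset[OF _ finc[OF that]]) (auto simp: weak_comps_def)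
    have PS: "Pd TZ (Suc n) z = bind_pmf \<pi> (\<lambda>z'. map_pmf (Cons a) (Pd TZ n z'))"
      by (rule Pd_trans[OF ok t])
    have part1: "pmf (Pd TZ (Suc n) z) \<beta> = prob_set {m \<in> max_comps TZ z. trace m = \<beta>}" for \<beta>
    proof (cases "\<beta> \<noteq> [] \<and> hd \<beta> = a")
      case True
      then obtain \<beta>' where b: "\<beta> = a # \<beta>'" by (cases \<beta>) auto
      have meq: "{m \<in> max_comps TZ z. trace m = \<beta>} =
            cons3 a \<pi> ` (SIGMA z':set_pmf \<pi>. {m \<in> max_comps TZ z'. trace m = \<beta>'})"
        unfolding max_trans[OF ok t] b by (simp add: cons3_filter trace_def)
      have "prob_set {m \<in> max_comps TZ z. trace m = \<beta>} =
           (\<Sum>z'\<in>set_pmf \<pi>. pmf \<pi> z' * prob_set {m \<in> max_comps TZ z'. trace m = \<beta>'})"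
      proof -
        have "prob_set (cons3 a \<pi> ` (SIGMA z':set_pmf \<pi>. {m \<in> max_comps TZ z'. trace m = \<beta>'})) =
           (\<Sum>z'\<in>set_pmf \<pi>. pmf \<pi> z' * prob_set {m \<in> max_comps TZ z'. trace m = \<beta>'})"
          by (rule prob_set_cons3[OF fin\<pi>]) (use finmax in \<open>intro ballI\<close>)
        then show ?thesis by (simp only: meq)
      qed
      also have "\<dots> = (\<Sum>z'\<in>set_pmf \<pi>. pmf \<pi> z' * pmf (map_pmf (Cons a) (Pd TZ n z')) \<beta>)"
        using IH1 by (intro sum.cong) (auto simp: b pmf_map_inj' inj_on_def)
      also have "\<dots> = pmf (Pd TZ (Suc n) z) \<beta>"
        unfolding PS by (simp add: pmf_bind_fin[OF fin\<pi>])
      finally show ?thesis by simp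
    next
      case False
      have e: "{m \<in> max_comps TZ z. trace m = \<beta>} = {}"
        using False unfolding max_trans[OF ok t] by (cases \<beta>) (auto simp: cons3_filter trace_def)
      have z0: "pmf (map_pmf (Cons a) (Pd TZ n z')) \<beta> = 0" for z'
        using False by (intro pmf_map_outside) auto
      have "pmf (Pd TZ (Suc n) z) \<beta> = 0" unfolding PS pmf_bind_fin[OF fin\<pi>] using z0 by simp
      then show ?thesis by (simp add: e prob_set_def)
    qed
    have part2: "prob_set (weak_comps TZ z \<alpha>) = measure_pmf.prob (Pd TZ (Suc n) z) {\<beta>. pfx \<alpha> (vis \<beta>)}" for \<alpha>
    proof -
      have finwk: "finite (wk TZ z' a \<alpha>)" if "z' \<in> set_pmf \<pi>" for z'
        by (rule finite_subset[OF _ finc[OF that]]) (auto simp: wk_def)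
      have fS: "finite (cons3 a \<pi> ` (SIGMA z':set_pmf \<pi>. wk TZ z' a \<alpha>))"
        using fin\<pi> finwk by (intro finite_imageI finite_SigmaI) auto
      have fA: "finite (if \<alpha> = [] \<and> a \<noteq> Tau then {[] :: (nat, 'a) comp} else {})" by simp
      have dj: "(if \<alpha> = [] \<and> a \<noteq> Tau then {[] :: (nat, 'a) comp} else {}) \<inter> cons3 a \<pi> ` (SIGMA z':set_pmf \<pi>. wk TZ z' a \<alpha>) = {}"
        using nil_notin_cons3[of a \<pi>] by auto
      have "prob_set (weak_comps TZ z \<alpha>) = prob_set (if \<alpha> = [] \<and> a \<noteq> Tau then {[] :: (nat, 'a) comp} else {}) +
             prob_set (cons3 a \<pi> ` (SIGMA z':set_pmf \<pi>. wk TZ z' a \<alpha>))"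
        unfolding weak_trans[OF ok t] using prob_set_union[OF fA fS dj] by simp
      also have "prob_set (if \<alpha> = [] \<and> a \<noteq> Tau then {[] :: (nat, 'a) comp} else {}) = (if \<alpha> = [] \<and> a \<noteq> Tau then 1 else 0)"
        by (simp add: prob_set_def)
      also have "prob_set (cons3 a \<pi> ` (SIGMA z':set_pmf \<pi>. wk TZ z' a \<alpha>)) =
            (\<Sum>z'\<in>set_pmf \<pi>. pmf \<pi> z' * prob_set (wk TZ z' a \<alpha>))"
        by (rule prob_set_cons3[OF fin\<pi>]) (use finwk in \<open>intro ballI\<close>)
      finally have L: "prob_set (weak_comps TZ z \<alpha>) = (if \<alpha> = [] \<and> a \<noteq> Tau then 1 else 0) +
            (\<Sum>z'\<in>set_pmf \<pi>. pmf \<pi> z' * prob_set (wk TZ z' a \<alpha>))" .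
      have R: "measure_pmf.prob (Pd TZ (Suc n) z) {\<beta>. pfx \<alpha> (vis \<beta>)} =
           (\<Sum>z'\<in>set_pmf \<pi>. pmf \<pi> z' * measure_pmf.prob (Pd TZ n z') {\<beta>. pfx \<alpha> (vis (a # \<beta>))})"
        unfolding PS by (simp add: prob_bind_fin[OF fin\<pi>] vimage_def)
      show ?thesis
      proof (cases a)
        case Tau
        then show ?thesis unfolding L R using IH2 by (auto simp: wk_Tau intro!: sum.cong)
      next
        case (Act b)
        show ?thesis
        proof (cases \<alpha>)
          case Nil
          have "(\<Sum>z'\<in>set_pmf \<pi>. pmf \<pi> z') = 1" using sum_pmf_eq_1[OF fin\<pi>] by simp
          then show ?thesis unfolding L R using Act Nil by (simp add: wk_Act prob_set_def)
        next
          case (Cons x \<alpha>')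
          show ?thesis
          proof (cases "x = b")
            case True
            then show ?thesis unfolding L R using Act Cons IH2 by (auto simp: wk_Act intro!: sum.cong)
          next
            case False
            then show ?thesis unfolding L R using Act Cons by (simp add: wk_Act prob_set_def)
          qed
        qed
      qed
    qed
    show ?thesis using part1 part2 by blast
  qed
qed

lemma set_Pd: "set_pmf (Pd TZ n z) \<subseteq> {g. length g \<le> n}"
proof (induction n arbitrary: z)
  case 0 then show ?case by simp
next
  case (Suc n)
  then show ?case
    by (auto simp: Let_def set_bind_pmf) (fastforce)
qed

lemma length_vis: "length (vis x) \<le> length x"
  by (induction x rule: vis.induct) auto

lemma comp_map:
  assumes res: "is_resolution T s Z TZ corr z0"
  shows "is_comp TZ z c \<Longrightarrow> z \<in> Z \<Longrightarrow> \<exists>c'. is_comp T (corr z) c' \<and> length c' = length c"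
proof (induction rule: is_comp.induct)
  case (comp_Nil s) then show ?case by (intro exI[of _ "[]"]) simp
next
  case (comp_Cons z a \<pi> z' c)
  have "z' \<in> Z" using res comp_Cons.hyps(1,2) unfolding is_resolution_def by blast
  then obtain c' where c': "is_comp T (corr z') c'" "length c' = length c" using comp_Cons.IH by blast
  obtain \<pi>' where p: "(corr z, a, \<pi>') \<in> T" "\<forall>y\<in>Z. pmf \<pi> y = pmf \<pi>' (corr y)"
    using res comp_Cons.hyps(1) unfolding is_resolution_def by fast
  have "pmf \<pi>' (corr z') > 0" using p(2) \<open>z' \<in> Z\<close> comp_Cons.hyps(2) pmf_positive by metis
  then have "corr z' \<in> set_pmf \<pi>'" by (simp add: pmf_positive_iff)
  then show ?case using c' p(1) by (intro exI[of _ "(a, \<pi>', corr z') # c'"]) auto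
qed

lemma res_ok: "is_resolution T s Z TZ corr z0 \<Longrightarrow> okT TZ"
  unfolding is_resolution_def okT_def by fast

lemma res_bnd:
  assumes res: "is_resolution T s Z TZ corr z0" and b: "\<forall>c\<in>comps T s. length c \<le> n"
  shows "bnd TZ n z0"
  unfolding bnd_def
proof
  fix c assume "c \<in> comps TZ z0"
  moreover have "z0 \<in> Z" "corr z0 = s" using res unfolding is_resolution_def by auto
  ultimately obtain c' where "is_comp T s c'" "length c' = length c"
    using comp_map[OF res] by (fastforce simp: comps_def)
  then show "length c \<le> n" using b by (auto simp: comps_def)
qed

fun form :: "'a act list \<Rightarrow> 'a tform" where
  "form [] = TTop"
| "form (a # x) = Diam a (form x)"

lemma tf_form[simp]: "tf_trace (form x) = x" by (induction x) auto
lemma form_tf[simp]: "form (tf_trace \<Phi>) = \<Phi>" by (induction \<Phi>) auto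
lemma inj_form: "inj form" by (metis injI tf_form)

lemma sat_len: "(sat_c m \<Phi> \<and> length m = depth \<Phi>) \<longleftrightarrow> trace m = tf_trace \<Phi>"
proof (induction \<Phi> arbitrary: m)
  case TTop then show ?case by (simp add: trace_def)
next
  case (Diam a \<Phi>)
  show ?case
  proof (cases m)
    case Nil then show ?thesis by (simp add: trace_def)
  next
    case (Cons p c)
    obtain b \<pi> s' where p: "p = (b, \<pi>, s')" by (cases p)
    show ?thesis using Diam.IH[of c] Cons p by (simp add: trace_def)
  qed
qed

lemma res_facts:
  assumes res: "is_resolution T s Z TZ corr z" and bs: "\<exists>n. \<forall>c\<in>comps T s. length c \<le> n"
  shows "\<exists>Q \<Psi> N. set_pmf Q \<subseteq> {g. length g \<le> N} \<and>
     (\<forall>\<alpha>. prob_set (weak_comps TZ z \<alpha>) = measure_pmf.prob Q {g. pfx \<alpha> g}) \<and>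
     \<Psi> \<in> Lw T s \<and>
     (\<forall>\<Psi>'. finite (set_pmf \<Psi>') \<and>
        (\<forall>\<Phi>\<in>set_pmf \<Psi>'. prob_set {c \<in> max_comps TZ z. sat_c c \<Phi> \<and> length c = depth \<Phi>} = pmf \<Psi>' \<Phi>)
        \<longrightarrow> \<Psi>' = \<Psi>) \<and>
     (\<forall>\<gamma>. measure_pmf.prob \<Psi> {\<Phi>. vis (tf_trace \<Phi>) = \<gamma>} = pmf Q \<gamma>)"
proof -
  obtain n where "\<forall>c\<in>comps T s. length c \<le> n" using bs by blast
  then have bn: "bnd TZ n z" using res_bnd[OF res] by blast
  have ok: "okT TZ" using res_ok[OF res] .
  define P where "P = Pd TZ n z"
  have C: "\<forall>\<beta>. pmf P \<beta> = prob_set {m \<in> max_comps TZ z. trace m = \<beta>}"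
     "\<forall>\<alpha>. prob_set (weak_comps TZ z \<alpha>) = measure_pmf.prob P {\<beta>. pfx \<alpha> (vis \<beta>)}"
    using core[OF ok bn] unfolding P_def by auto
  define Q where "Q = map_pmf vis P"
  define \<Psi> where "\<Psi> = map_pmf form P"
  have pmfPsi: "pmf \<Psi> \<Phi> = prob_set {c \<in> max_comps TZ z. sat_c c \<Phi> \<and> length c = depth \<Phi>}" for \<Phi>
  proof -
    have "pmf \<Psi> \<Phi> = pmf P (tf_trace \<Phi>)"
      unfolding \<Psi>_def by (metis form_tf pmf_map_inj'[OF inj_form])
    then show ?thesis using C(1) by (simp add: sat_len)
  qed
  have finP: "finite (set_pmf P)"
  proof (rule finite_subset)
    show "set_pmf P \<subseteq> trace ` comps TZ z"
    proof
      fix \<beta> assume "\<beta> \<in> set_pmf P"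
      then have "prob_set {m \<in> max_comps TZ z. trace m = \<beta>} \<noteq> 0" using C(1) by (simp add: set_pmf_eq)
      then have "{m \<in> max_comps TZ z. trace m = \<beta>} \<noteq> {}" by (rule contrapos_nn) (simp only: prob_set_def sum.empty)
      then show "\<beta> \<in> trace ` comps TZ z" by (auto simp: max_comps_def)
    qed
    show "finite (trace ` comps TZ z)" using finite_comps[OF ok bn] by simp
  qed
  have finPsi: "finite (set_pmf \<Psi>)" unfolding \<Psi>_def using finP by simp
  have inL: "\<Psi> \<in> Lw T s"
    unfolding Lw_def sat_def using finPsi res pmfPsi by auto
  have uniq: "\<Psi>' = \<Psi>" if "finite (set_pmf \<Psi>')"
      "\<forall>\<Phi>\<in>set_pmf \<Psi>'. prob_set {c \<in> max_comps TZ z. sat_c c \<Phi> \<and> length c = depth \<Phi>} = pmf \<Psi>' \<Phi>" for \<Psi>'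
    using pmf_eq_on_supp[OF that(1)] that(2) pmfPsi by simp
  have d: "measure_pmf.prob \<Psi> {\<Phi>. vis (tf_trace \<Phi>) = \<gamma>} = pmf Q \<gamma>" for \<gamma>
    unfolding \<Psi>_def Q_def by (simp add: pmf_map vimage_def)
  have a: "prob_set (weak_comps TZ z \<alpha>) = measure_pmf.prob Q {g. pfx \<alpha> g}" for \<alpha>
    unfolding Q_def using C(2) by (simp add: vimage_def)
  have bQ: "set_pmf Q \<subseteq> {g. length g \<le> n}"
  proof
    fix g assume "g \<in> set_pmf Q"
    then obtain \<beta> where b: "\<beta> \<in> set_pmf P" "g = vis \<beta>" unfolding Q_def by auto
    have "length \<beta> \<le> n" using b(1) set_Pd[of TZ n z] unfolding P_def by blast
    then show "g \<in> {g. length g \<le> n}" using b(2) length_vis[of \<beta>] by simp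
  qed
  show ?thesis using bQ a inL uniq d by blast
qed

lemma vis_map_Act[simp]: "vis (map Act g) = g" by (induction g) auto

lemma dag_iff:
  "dag_equiv \<Psi> \<Psi>' \<longleftrightarrow> (\<forall>\<gamma>. measure_pmf.prob \<Psi> {\<Phi>. vis (tf_trace \<Phi>) = \<gamma>} =
                              measure_pmf.prob \<Psi>' {\<Phi>. vis (tf_trace \<Phi>) = \<gamma>})"
proof -
  have e: "{\<Phi>'. tf_equiv \<Phi>' \<Phi>} = {\<Phi>'. vis (tf_trace \<Phi>') = vis (tf_trace \<Phi>)}" for \<Phi> :: "'a tform"
    by (simp add: tf_equiv_def trace_equiv_def)
  show ?thesis unfolding dag_equiv_def e
    by (metis tf_form vis_map_Act)
qed

lemma dag_sym: "dag_equiv \<Psi> \<Psi>' \<longleftrightarrow> dag_equiv \<Psi>' \<Psi>"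
  unfolding dag_equiv_def by metis

lemma half:
  assumes bs: "\<exists>n. \<forall>c\<in>comps T s. length c \<le> n" and bt: "\<exists>n. \<forall>c\<in>comps T t. length c \<le> n"
  shows "wpt_sim T s t \<longleftrightarrow> (\<forall>\<Psi>\<in>Lw T s. \<exists>\<Psi>'\<in>Lw T t. dag_equiv \<Psi> \<Psi>')"
proof
  assume W: "wpt_sim T s t"
  show "\<forall>\<Psi>\<in>Lw T s. \<exists>\<Psi>'\<in>Lw T t. dag_equiv \<Psi> \<Psi>'"
  proof
    fix \<Psi> assume "\<Psi> \<in> Lw T s"
    then obtain Z TZ corr z where res: "is_resolution T s Z TZ corr z" and fin: "finite (set_pmf \<Psi>)"
      and sat: "\<forall>\<Phi>\<in>set_pmf \<Psi>. prob_set {c \<in> max_comps TZ z. sat_c c \<Phi> \<and> length c = depth \<Phi>} = pmf \<Psi> \<Phi>"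
      unfolding Lw_def sat_def by blast
    obtain Q \<Psi>0 N where F: "set_pmf Q \<subseteq> {g. length g \<le> N}"
      "\<forall>\<alpha>. prob_set (weak_comps TZ z \<alpha>) = measure_pmf.prob Q {g. pfx \<alpha> g}"
      "\<forall>\<Psi>'. finite (set_pmf \<Psi>') \<and>
        (\<forall>\<Phi>\<in>set_pmf \<Psi>'. prob_set {c \<in> max_comps TZ z. sat_c c \<Phi> \<and> length c = depth \<Phi>} = pmf \<Psi>' \<Phi>)
        \<longrightarrow> \<Psi>' = \<Psi>0"
      "\<forall>\<gamma>. measure_pmf.prob \<Psi>0 {\<Phi>. vis (tf_trace \<Phi>) = \<gamma>} = pmf Q \<gamma>"
      using res_facts[OF res bs] by blast
    have "\<Psi> = \<Psi>0" using F(3) fin sat by blast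
    obtain Z' TZ' corr' z' where res': "is_resolution T t Z' TZ' corr' z'"
      and eqw: "\<forall>\<alpha>. prob_set (weak_comps TZ z \<alpha>) = prob_set (weak_comps TZ' z' \<alpha>)"
      using W res unfolding wpt_sim_def by blast
    obtain Q' \<Psi>1 N' where F': "set_pmf Q' \<subseteq> {g. length g \<le> N'}"
      "\<forall>\<alpha>. prob_set (weak_comps TZ' z' \<alpha>) = measure_pmf.prob Q' {g. pfx \<alpha> g}"
      "\<Psi>1 \<in> Lw T t"
      "\<forall>\<gamma>. measure_pmf.prob \<Psi>1 {\<Phi>. vis (tf_trace \<Phi>) = \<gamma>} = pmf Q' \<gamma>"
      using res_facts[OF res' bt] by blast
    have "Q = Q'"
      by (rule uniq_prefix[of Q "max N N'" Q']) (use F(1,2) F'(1,2) eqw in auto)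
    then have "dag_equiv \<Psi> \<Psi>1" unfolding dag_iff using F(4) F'(4) \<open>\<Psi> = \<Psi>0\<close> by simp
    then show "\<exists>\<Psi>'\<in>Lw T t. dag_equiv \<Psi> \<Psi>'" using F'(3) by blast
  qed
next
  assume L: "\<forall>\<Psi>\<in>Lw T s. \<exists>\<Psi>'\<in>Lw T t. dag_equiv \<Psi> \<Psi>'"
  show "wpt_sim T s t"
    unfolding wpt_sim_def
  proof (intro allI impI)
    fix Z TZ corr z assume res: "is_resolution T s Z TZ corr z"
    obtain Q \<Psi>0 N where F: "set_pmf Q \<subseteq> {g. length g \<le> N}"
      "\<forall>\<alpha>. prob_set (weak_comps TZ z \<alpha>) = measure_pmf.prob Q {g. pfx \<alpha> g}"
      "\<Psi>0 \<in> Lw T s"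
      "\<forall>\<gamma>. measure_pmf.prob \<Psi>0 {\<Phi>. vis (tf_trace \<Phi>) = \<gamma>} = pmf Q \<gamma>"
      using res_facts[OF res bs] by blast
    obtain \<Psi>' where "\<Psi>' \<in> Lw T t" "dag_equiv \<Psi>0 \<Psi>'" using L F(3) by blast
    then obtain Z' TZ' corr' z' where res': "is_resolution T t Z' TZ' corr' z'" and fin: "finite (set_pmf \<Psi>')"
      and sat: "\<forall>\<Phi>\<in>set_pmf \<Psi>'. prob_set {c \<in> max_comps TZ' z'. sat_c c \<Phi> \<and> length c = depth \<Phi>} = pmf \<Psi>' \<Phi>"
      unfolding Lw_def sat_def by blast
    obtain Q' \<Psi>1 N' where F': "set_pmf Q' \<subseteq> {g. length g \<le> N'}"
      "\<forall>\<alpha>. prob_set (weak_comps TZ' z' \<alpha>) = measure_pmf.prob Q' {g. pfx \<alpha> g}"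
      "\<forall>\<Psi>''. finite (set_pmf \<Psi>'') \<and>
        (\<forall>\<Phi>\<in>set_pmf \<Psi>''. prob_set {c \<in> max_comps TZ' z'. sat_c c \<Phi> \<and> length c = depth \<Phi>} = pmf \<Psi>'' \<Phi>)
        \<longrightarrow> \<Psi>'' = \<Psi>1"
      "\<forall>\<gamma>. measure_pmf.prob \<Psi>1 {\<Phi>. vis (tf_trace \<Phi>) = \<gamma>} = pmf Q' \<gamma>"
      using res_facts[OF res' bt] by blast
    have "\<Psi>' = \<Psi>1" using F'(3) fin sat by blast
    then have "Q = Q'" using \<open>dag_equiv \<Psi>0 \<Psi>'\<close> F(4) F'(4) unfolding dag_iff by (intro pmf_eqI) metis
    then show "\<exists>Z' TZ' corr' z'. is_resolution T t Z' TZ' corr' z' \<and>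
           (\<forall>\<alpha>. prob_set (weak_comps TZ z \<alpha>) = prob_set (weak_comps TZ' z' \<alpha>))"
      using res' F(2) F'(2) by metis
  qed
qed

theorem theorem13:
  fixes T :: "('s, 'a) pts" and s t :: 's
  assumes fin_supp: "\<forall>(u, a, \<pi>)\<in>T. finite (set_pmf \<pi>)"
    and image_finite: "\<forall>u. finite {(a, \<pi>). (u, a, \<pi>) \<in> T}"
    and finite_s: "\<exists>n. \<forall>c\<in>comps T s. length c \<le> n"
    and finite_t: "\<exists>n. \<forall>c\<in>comps T t. length c \<le> n"
  shows "weak_trace_equiv T s t \<longleftrightarrow> Lset_equiv (Lw T s) (Lw T t)"
  unfolding weak_trace_equiv_def Lset_equiv_def
  using half[OF finite_s finite_t] half[OF finite_t finite_s] dag_sym by metis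

end
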